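(* For integers $k,\ell,r,n$ with $0 \leq k-r \leq k \leq \ell \leq \ell+r \leq n$, the polynomial \[ \overline{ { n \brack k}}_{q,t} \overline{ { n \brack \ell}}_{q,t} - \overline{ { n \brack k-r}}_{q,t} \overline{ { n \brack \ell+r}}_{q,t} \] has non-negative coefficients as a polynomial in $t$ and $q$.
   Context: An overpartition is a partition in which the last occurrence of each distinct part size may be overlined; its weight $|\lambda|$ is the sum of its parts. For integers $0\le b\le a$, $\overline{{a \brack b}}_{q,t}=\sum_{\lambda} t^{\#_o(\lambda)} q^{|\lambda|}$, the sum over all overpartitions $\lambda$ with largest part at most $a-b$ and at most $b$ parts, $\#_o(\lambda)$ being the number of overlined parts. *)

theory Defs
  imports "HOL-Library.Multiset" "HOL-Computational_Algebra.Polynomial"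
begin

text \<open>An overpartition is a partition (a finite multiset of positive parts) together with
  the set of distinct part sizes whose last occurrence is overlined.\<close>

definition overpartitions_box :: "nat \<Rightarrow> nat \<Rightarrow> (nat multiset \<times> nat set) set" where
  "overpartitions_box m b =
     {(p, ov). (\<forall>x \<in># p. 0 < x \<and> x \<le> m) \<and> size p \<le> b \<and> ov \<subseteq> set_mset p}"

text \<open>Bivariate polynomials in q and t are represented as polynomials in q whose
  coefficients are polynomials in t (type int poly poly).
  ovgauss a b is the overpartition analogue of the Gaussian polynomial [a choose b]_{q,t}:
  the sum of t^(number of overlined parts) q^(weight) over overpartitions with largest part
  at most a - b and at most b parts.\<close>

definition ovgauss :: "nat \<Rightarrow> nat \<Rightarrow> int poly poly" where
  "ovgauss a b = (\<Sum>(p, ov) \<in> overpartitions_box (a - b) b. monom (monom 1 (card ov)) (sum_mset p))"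

definition nonneg_coeffs2 :: "int poly poly \<Rightarrow> bool" where
  "nonneg_coeffs2 P \<longleftrightarrow> (\<forall>i j. 0 \<le> coeff (coeff P i) j)"

end

theory Submission
  imports Defs
begin


lemma nn_add: "nonneg_coeffs2 a \<Longrightarrow> nonneg_coeffs2 b \<Longrightarrow> nonneg_coeffs2 (a + b)"
  unfolding nonneg_coeffs2_def by simp

lemma nn_mult: "nonneg_coeffs2 a \<Longrightarrow> nonneg_coeffs2 b \<Longrightarrow> nonneg_coeffs2 (a * b)"
  unfolding nonneg_coeffs2_def coeff_mult
  by (auto simp: coeff_sum coeff_mult intro!: sum_nonneg mult_nonneg_nonneg)

lemma nn_monom: "nonneg_coeffs2 (monom (monom 1 c) s)"
  unfolding nonneg_coeffs2_def by auto

lemma nn_zero: "nonneg_coeffs2 0" unfolding nonneg_coeffs2_def by auto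
lemma nn_one: "nonneg_coeffs2 1" unfolding nonneg_coeffs2_def by (auto simp: coeff_1)

definition qv :: "int poly poly" where "qv = monom 1 1"
definition tv :: "int poly poly" where "tv = monom (monom 1 1) 0"

lemma nn_qv: "nonneg_coeffs2 qv" unfolding qv_def nonneg_coeffs2_def by (auto simp: coeff_1)
lemma nn_tv: "nonneg_coeffs2 tv" unfolding tv_def by (rule nn_monom)
lemma nn_qpow: "nonneg_coeffs2 (qv ^ n)"
  by (induction n) (auto intro: nn_mult nn_qv nn_one)

fun Q :: "nat \<Rightarrow> nat \<Rightarrow> int poly poly" where
  "Q 0 b = 1"
| "Q (Suc m) 0 = 1"
| "Q (Suc m) (Suc b) = Q m (Suc b) + qv ^ Suc m * Q (Suc m) b + tv * qv ^ Suc m * Q m b"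

lemma Q_0 [simp]: "Q m 0 = 1" by (cases m) auto

lemma nn_Q: "nonneg_coeffs2 (Q m b)"
  by (induction m b rule: Q.induct) (auto intro!: nn_add nn_mult nn_one nn_qpow nn_tv nn_qv)

definition Qi :: "int \<Rightarrow> int \<Rightarrow> int poly poly" where
  "Qi x y = (if x < 0 \<or> y < 0 then 0 else Q (nat x) (nat y))"

lemma nn_Qi: "nonneg_coeffs2 (Qi x y)"
  unfolding Qi_def by (auto intro: nn_Q nn_zero)

lemma QiR2: assumes "x \<ge> 0" "y \<ge> 0" "x \<noteq> 0 \<or> y \<noteq> 0"
  shows "Qi x y = Qi (x-1) y + qv ^ nat x * Qi x (y-1) + tv * qv ^ nat x * Qi (x-1) (y-1)"
proof -
  consider "x = 0" "y > 0" | "x > 0" "y = 0" | "x > 0" "y > 0" using assms by linarith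
  then show ?thesis
  proof cases
    case 1 then show ?thesis by (simp add: Qi_def)
  next
    case 2
    then obtain a where "nat x = Suc a" by (metis gr0_implies_Suc zero_less_nat_eq)
    then show ?thesis using 2 by (simp add: Qi_def)
  next
    case 3
    then obtain a b where ab: "nat x = Suc a" "nat y = Suc b"
      by (metis gr0_implies_Suc zero_less_nat_eq)
    have "nat (x-1) = a" "nat (y-1) = b" using ab 3 by auto
    then show ?thesis using 3 ab by (simp add: Qi_def)
  qed
qed

lemma Q1_Suc: "Q 1 (Suc b) = Q 1 b + qv ^ Suc b * (1 + tv)"
proof (induction b)
  case 0 then show ?case by (simp add: algebra_simps)
next
  case (Suc b)
  have "Q 1 (Suc (Suc b)) = 1 + tv * qv + qv * Q 1 (Suc b)"
    by (simp add: numeral_2_eq_2 algebra_simps)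
  also have "\<dots> = (1 + tv * qv + qv * Q 1 b) + qv ^ Suc (Suc b) * (1 + tv)"
    using Suc by (simp add: algebra_simps)
  also have "1 + tv * qv + qv * Q 1 b = Q 1 (Suc b)"
    by (simp add: algebra_simps)
  finally show ?case .
qed

lemma Q_Suc_1: "Q (Suc m) 1 = 1 + tv * qv + qv * Q m 1"
proof (induction m)
  case 0 then show ?case by (simp add: algebra_simps)
next
  case (Suc m)
  have "Q (Suc (Suc m)) 1 = Q (Suc m) 1 + qv ^ Suc (Suc m) * (1 + tv)"
    by (simp add: algebra_simps)
  also have "\<dots> = 1 + tv * qv + qv * (Q m 1 + qv ^ Suc m * (1 + tv))"
    unfolding Suc.IH by (simp del: Q.simps add: algebra_simps)
  also have "Q m 1 + qv ^ Suc m * (1 + tv) = Q (Suc m) 1"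
    by (simp add: algebra_simps)
  finally show ?case .
qed

lemma aux_R1:
  fixes L R X Y1 Y2 Z1 Z2 Z3 W1 W2 a b c d e f g h :: "'a::comm_ring_1"
  assumes "L = Y1 + a*Y2 + b*X" "Y1 = X + c*Z1 + d*Z2" "Y2 = W1 + e*X + f*W2" "X = W2 + e*Z2 + f*Z3"
    "R = Y2 + c*Y1 + d*X" "Y2 = X + a*W1 + b*W2" "Y1 = Z1 + g*X + h*Z2" "X = Z2 + g*W2 + h*Z3"
    "a*e = c*g" "a*f = d*g" "b*e = c*h" "b*f = d*h"
  shows "L = R"
proof -
  have h1: "b*X = b*W2 + (b*e)*Z2 + (b*f)*Z3" using assms(4) by (simp add: algebra_simps)
  have h2: "d*X = d*Z2 + (d*g)*W2 + (d*h)*Z3" using assms(8) by (simp add: algebra_simps)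
  have L1: "L = X + c*Z1 + d*Z2 + a*W1 + (a*e)*X + (a*f)*W2 + b*X"
    using assms(1,2,3) by (simp add: algebra_simps)
  have R1: "R = X + a*W1 + b*W2 + c*Z1 + (c*g)*X + (c*h)*Z2 + d*X"
    using assms(5,6,7) by (simp add: algebra_simps)
  have L2: "L = X + c*Z1 + d*Z2 + a*W1 + (c*g)*X + (d*g)*W2 + (b*W2 + (c*h)*Z2 + (d*h)*Z3)"
    unfolding L1 h1 assms(9,10,11,12) ..
  have R2: "R = X + a*W1 + b*W2 + c*Z1 + (c*g)*X + (c*h)*Z2 + (d*Z2 + (d*g)*W2 + (d*h)*Z3)"
    unfolding R1 h2 ..
  show ?thesis unfolding L2 R2 by (simp add: algebra_simps)
qed

lemma QR1: "Q (Suc m) (Suc b) = Q (Suc m) b + qv ^ Suc b * Q m (Suc b) + tv * qv ^ Suc b * Q m b"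
proof (induction "m + b" arbitrary: m b rule: less_induct)
  case less
  show ?case
  proof (cases m)
    case 0
    then show ?thesis using Q1_Suc[of b] by (simp add: algebra_simps)
  next
    case (Suc m')
    show ?thesis
    proof (cases b)
      case 0
      then show ?thesis using Q_Suc_1[of m] by (simp del: Q.simps add: algebra_simps)
    next
      case (Suc b')
      have i1: "Q (Suc m') (Suc (Suc b')) = Q (Suc m') (Suc b') + qv ^ Suc (Suc b') * Q m' (Suc (Suc b')) + tv * qv ^ Suc (Suc b') * Q m' (Suc b')"
        using less[of m' "Suc b'"] \<open>m = Suc m'\<close> Suc by simp
      have i2: "Q (Suc (Suc m')) (Suc b') = Q (Suc (Suc m')) b' + qv ^ Suc b' * Q (Suc m') (Suc b') + tv * qv ^ Suc b' * Q (Suc m') b'"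
        using less[of "Suc m'" b'] \<open>m = Suc m'\<close> Suc by simp
      have i3: "Q (Suc m') (Suc b') = Q (Suc m') b' + qv ^ Suc b' * Q m' (Suc b') + tv * qv ^ Suc b' * Q m' b'"
        using less[of m' b'] \<open>m = Suc m'\<close> Suc by simp
      have d0: "Q (Suc (Suc m')) (Suc (Suc b')) = Q (Suc m') (Suc (Suc b')) + qv ^ Suc (Suc m') * Q (Suc (Suc m')) (Suc b') + tv * qv ^ Suc (Suc m') * Q (Suc m') (Suc b')"
        by (rule Q.simps(3))
      have d1: "Q (Suc (Suc m')) (Suc b') = Q (Suc m') (Suc b') + qv ^ Suc (Suc m') * Q (Suc (Suc m')) b' + tv * qv ^ Suc (Suc m') * Q (Suc m') b'"
        by (rule Q.simps(3))
      have d2: "Q (Suc m') (Suc (Suc b')) = Q m' (Suc (Suc b')) + qv ^ Suc m' * Q (Suc m') (Suc b') + tv * qv ^ Suc m' * Q m' (Suc b')"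
        by (rule Q.simps(3))
      have d3: "Q (Suc m') (Suc b') = Q m' (Suc b') + qv ^ Suc m' * Q (Suc m') b' + tv * qv ^ Suc m' * Q m' b'"
        by (rule Q.simps(3))
      show ?thesis unfolding \<open>m = Suc m'\<close> Suc
        apply (rule aux_R1[OF d0 i1 i2 i3 _ d1 d2 d3])
        by (simp_all add: algebra_simps)
    qed
  qed
qed

lemma QiR1: assumes "x \<ge> 0" "y \<ge> 0" "x \<noteq> 0 \<or> y \<noteq> 0"
  shows "Qi x y = Qi x (y-1) + qv ^ nat y * Qi (x-1) y + tv * qv ^ nat y * Qi (x-1) (y-1)"
proof -
  consider "x = 0" "y > 0" | "x > 0" "y = 0" | "x > 0" "y > 0" using assms by linarith
  then show ?thesis
  proof cases
    case 1
    then obtain a where "nat y = Suc a" by (metis gr0_implies_Suc zero_less_nat_eq)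
    then show ?thesis using 1 by (simp add: Qi_def)
  next
    case 2
    then show ?thesis by (simp add: Qi_def)
  next
    case 3
    then obtain a b where ab: "nat x = Suc a" "nat y = Suc b"
      by (metis gr0_implies_Suc zero_less_nat_eq)
    have "nat (x-1) = a" "nat (y-1) = b" using ab 3 by auto
    then show ?thesis using 3 ab QR1[of a b] by (simp add: Qi_def)
  qed
qed

definition Hx :: "int \<Rightarrow> int \<Rightarrow> int \<Rightarrow> int \<Rightarrow> nat \<Rightarrow> int poly poly" where
  "Hx x1 y1 x2 y2 e = Qi x1 y1 * Qi x2 y2 - qv ^ e * Qi (x1+1) (y1-1) * Qi (x2-1) (y2+1)"

lemma IdA: assumes "x2 \<ge> 1" "y2 \<ge> 0"
  shows "Hx x1 y1 x2 y2 e = Hx x1 y1 x2 (y2-1) e + qv ^ nat y2 * Hx x1 y1 (x2-1) y2 (e+1)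
     + tv * qv ^ nat y2 * Hx x1 y1 (x2-1) (y2-1) (e+1)"
proof -
  have r1: "Qi x2 y2 = Qi x2 (y2-1) + qv ^ nat y2 * Qi (x2-1) y2 + tv * qv ^ nat y2 * Qi (x2-1) (y2-1)"
    using QiR1[of x2 y2] assms by simp
  have r2: "Qi (x2-1) (y2+1) = Qi (x2-1) y2 + qv ^ nat y2 * qv * Qi (x2-2) (y2+1) + tv * (qv ^ nat y2 * qv) * Qi (x2-2) y2"
  proof -
    have "nat (y2+1) = Suc (nat y2)" using assms by simp
    then show ?thesis using QiR1[of "x2-1" "y2+1"] assms by (simp add: algebra_simps)
  qed
  have a1: "y2 - 1 + 1 = y2" "x2 - 1 - 1 = x2 - 2" by simp_all
  show ?thesis unfolding Hx_def a1 r1 r2 by (simp add: algebra_simps)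
qed

lemma IdB: assumes "x2 \<ge> 1" "y2 \<ge> 0"
  shows "Hx x1 y1 x2 y2 (Suc e) = Hx x1 y1 (x2-1) y2 (Suc e) + qv ^ nat x2 * Hx x1 y1 x2 (y2-1) e
     + tv * qv ^ nat x2 * Hx x1 y1 (x2-1) (y2-1) e"
proof -
  have r1: "Qi x2 y2 = Qi (x2-1) y2 + qv ^ nat x2 * Qi x2 (y2-1) + tv * qv ^ nat x2 * Qi (x2-1) (y2-1)"
    using QiR2[of x2 y2] assms by simp
  have e: "nat x2 = Suc (nat (x2-1))" using assms by simp
  have r2: "qv * Qi (x2-1) (y2+1) = qv * Qi (x2-2) (y2+1) + qv ^ nat x2 * Qi (x2-1) y2 + tv * qv ^ nat x2 * Qi (x2-2) y2"
    using QiR2[of "x2-1" "y2+1"] assms e by (simp add: algebra_simps)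
  have a1: "y2 - 1 + 1 = y2" "x2 - 1 - 1 = x2 - 2" by simp_all
  have "Hx x1 y1 x2 y2 (Suc e) = Qi x1 y1 * Qi x2 y2 - qv ^ e * Qi (x1+1) (y1-1) * (qv * Qi (x2-1) (y2+1))"
    unfolding Hx_def by (simp add: algebra_simps)
  also have "\<dots> = Hx x1 y1 (x2-1) y2 (Suc e) + qv ^ nat x2 * Hx x1 y1 x2 (y2-1) e
     + tv * qv ^ nat x2 * Hx x1 y1 (x2-1) (y2-1) e"
    unfolding r1 r2 Hx_def a1 by (simp add: algebra_simps)
  finally show ?thesis .
qed

lemma IdC: assumes "y1 \<ge> 1" "x1 \<ge> 0"
  shows "Hx x1 y1 x2 y2 (Suc e) = Hx x1 (y1-1) x2 y2 (Suc e) + qv ^ nat y1 * Hx (x1-1) y1 x2 y2 e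
     + tv * qv ^ nat y1 * Hx (x1-1) (y1-1) x2 y2 e"
proof -
  have r1: "Qi x1 y1 = Qi x1 (y1-1) + qv ^ nat y1 * Qi (x1-1) y1 + tv * qv ^ nat y1 * Qi (x1-1) (y1-1)"
    using QiR1[of x1 y1] assms by simp
  have e: "nat y1 = Suc (nat (y1-1))" using assms by simp
  have r2: "qv * Qi (x1+1) (y1-1) = qv * Qi (x1+1) (y1-2) + qv ^ nat y1 * Qi x1 (y1-1) + tv * qv ^ nat y1 * Qi x1 (y1-2)"
    using QiR1[of "x1+1" "y1-1"] assms e by (simp add: algebra_simps)
  have a1: "x1 - 1 + 1 = x1" "y1 - 1 - 1 = y1 - 2" by simp_all
  have "Hx x1 y1 x2 y2 (Suc e) = Qi x1 y1 * Qi x2 y2 - qv ^ e * (qv * Qi (x1+1) (y1-1)) * Qi (x2-1) (y2+1)"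
    unfolding Hx_def by (simp add: algebra_simps)
  also have "\<dots> = Hx x1 (y1-1) x2 y2 (Suc e) + qv ^ nat y1 * Hx (x1-1) y1 x2 y2 e
     + tv * qv ^ nat y1 * Hx (x1-1) (y1-1) x2 y2 e"
    unfolding r1 r2 Hx_def a1 by (simp add: algebra_simps)
  finally show ?thesis .
qed

lemma IdD: assumes "x1 \<ge> 1" "y1 \<ge> 1"
  shows "Hx x1 y1 x2 y2 e = Hx (x1-1) y1 x2 y2 e + qv ^ nat x1 * Hx x1 (y1-1) x2 y2 (e+1)
     + tv * qv ^ nat x1 * Hx (x1-1) (y1-1) x2 y2 (e+1)"
proof -
  have r1: "Qi x1 y1 = Qi (x1-1) y1 + qv ^ nat x1 * Qi x1 (y1-1) + tv * qv ^ nat x1 * Qi (x1-1) (y1-1)"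
    using QiR2[of x1 y1] assms by simp
  have r2: "Qi (x1+1) (y1-1) = Qi x1 (y1-1) + qv ^ nat x1 * qv * Qi (x1+1) (y1-2) + tv * (qv ^ nat x1 * qv) * Qi x1 (y1-2)"
  proof -
    have "nat (x1+1) = Suc (nat x1)" using assms by simp
    then show ?thesis using QiR2[of "x1+1" "y1-1"] assms by (simp add: algebra_simps)
  qed
  have a1: "x1 - 1 + 1 = x1" "y1 - 1 - 1 = y1 - 2" by simp_all
  show ?thesis unfolding Hx_def a1 r1 r2 by (simp add: algebra_simps)
qed

lemma nn3: "nonneg_coeffs2 a \<Longrightarrow> nonneg_coeffs2 b \<Longrightarrow> nonneg_coeffs2 c \<Longrightarrow>
  nonneg_coeffs2 (a + qv ^ n * b + tv * qv ^ n * c)"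
  by (intro nn_add nn_mult nn_qpow nn_tv)

lemma H_nonneg:
  "0 \<le> x1 \<Longrightarrow> 0 \<le> y1 \<Longrightarrow> 0 \<le> x2 \<Longrightarrow> 0 \<le> y2 \<Longrightarrow> y1 \<le> y2 + 1 \<Longrightarrow> x2 \<le> x1 + 1
   \<Longrightarrow> int e + y1 + x2 \<le> y2 + x1 + 2 \<Longrightarrow> nonneg_coeffs2 (Hx x1 y1 x2 y2 e)"
proof (induction "nat (x1+y1+x2+y2)" arbitrary: x1 y1 x2 y2 e rule: less_induct)
  case less
  note IH = less.hyps
  show ?case
  proof (cases "y1 = 0 \<or> x2 = 0")
    case True
    then have "Hx x1 y1 x2 y2 e = Qi x1 y1 * Qi x2 y2" unfolding Hx_def by (auto simp: Qi_def)
    then show ?thesis by (simp add: nn_mult nn_Qi)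
  next
    case False
    then have y1p: "y1 \<ge> 1" and x2p: "x2 \<ge> 1" using less.prems by auto
    show ?thesis
    proof (cases "y1 \<le> y2")
      case True
      show ?thesis
      proof (cases "int e + 1 + y1 + x2 \<le> y2 + x1 + 2")
        case True
        show ?thesis unfolding IdA[OF x2p less.prems(4)]
          apply (rule nn3)
          subgoal by (rule IH) (use less.prems y1p x2p \<open>y1 \<le> y2\<close> True in auto)
          subgoal by (rule IH) (use less.prems y1p x2p \<open>y1 \<le> y2\<close> True in auto)
          subgoal by (rule IH) (use less.prems y1p x2p \<open>y1 \<le> y2\<close> True in auto)
          done
      next
        case False
        then obtain e' where e': "e = Suc e'" using less.prems \<open>y1 \<le> y2\<close> by (cases e) auto
        show ?thesis unfolding e' IdB[OF x2p less.prems(4)]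
          apply (rule nn3)
          subgoal by (rule IH) (use less.prems y1p x2p \<open>y1 \<le> y2\<close> e' in auto)
          subgoal by (rule IH) (use less.prems y1p x2p \<open>y1 \<le> y2\<close> e' in auto)
          subgoal by (rule IH) (use less.prems y1p x2p \<open>y1 \<le> y2\<close> e' in auto)
          done
      qed
    next
      case notle: False
      show ?thesis
      proof (cases "x2 \<le> x1")
        case True
        show ?thesis
        proof (cases e)
          case (Suc e')
          show ?thesis unfolding Suc IdC[OF y1p less.prems(1)]
            apply (rule nn3)
            subgoal by (rule IH) (use less.prems y1p x2p notle \<open>x2 \<le> x1\<close> Suc in auto)
            subgoal by (rule IH) (use less.prems y1p x2p notle \<open>x2 \<le> x1\<close> Suc in auto)
            subgoal by (rule IH) (use less.prems y1p x2p notle \<open>x2 \<le> x1\<close> Suc in auto)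
            done
        next
          case 0
          have x1p: "x1 \<ge> 1" using x2p True by simp
          show ?thesis unfolding 0 IdD[OF x1p y1p]
            apply (rule nn3)
            subgoal by (rule IH) (use less.prems y1p x2p notle \<open>x2 \<le> x1\<close> 0 in auto)
            subgoal by (rule IH) (use less.prems y1p x2p notle \<open>x2 \<le> x1\<close> 0 in auto)
            subgoal by (rule IH) (use less.prems y1p x2p notle \<open>x2 \<le> x1\<close> 0 in auto)
            done
        qed
      next
        case False
        then have "y1 = y2 + 1" "x2 = x1 + 1" "e = 0" using less.prems notle by auto
        then have "Hx x1 y1 x2 y2 e = 0" unfolding Hx_def by simp
        then show ?thesis by (simp add: nn_zero)
      qed
    qed
  qed
qed




definition wt :: "nat multiset \<times> nat set \<Rightarrow> int poly poly" where
  "wt x = monom (monom 1 (card (snd x))) (sum_mset (fst x))"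

definition f2 :: "nat \<Rightarrow> nat multiset \<times> nat set \<Rightarrow> nat multiset \<times> nat set" where
  "f2 c x = (add_mset c (fst x), snd x)"
definition f3 :: "nat \<Rightarrow> nat multiset \<times> nat set \<Rightarrow> nat multiset \<times> nat set" where
  "f3 c x = (add_mset c (fst x), insert c (snd x))"

lemma box_0: "overpartitions_box 0 b = {({#}, {})}"
proof
  show "overpartitions_box 0 b \<subseteq> {({#}, {})}"
  proof
    fix x assume "x \<in> overpartitions_box 0 b"
    then obtain p ov where x: "x = (p, ov)" and h: "\<forall>y\<in>#p. 0 < y \<and> y \<le> 0" "ov \<subseteq> set_mset p"
      unfolding overpartitions_box_def by auto
    have "p = {#}"
    proof (rule ccontr)
      assume "p \<noteq> {#}"
      then obtain y where "y \<in># p" by (meson multiset_nonemptyE)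
      with h(1) show False by auto
    qed
    then show "x \<in> {({#}, {})}" using x h(2) by auto
  qed
next
  show "{({#}, {})} \<subseteq> overpartitions_box 0 b" unfolding overpartitions_box_def by auto
qed

lemma box_m0: "overpartitions_box m 0 = {({#}, {})}"
  unfolding overpartitions_box_def by auto

lemma box_decomp:
  "overpartitions_box (Suc m) (Suc b) = overpartitions_box m (Suc b) \<union> f2 (Suc m) ` overpartitions_box (Suc m) b
     \<union> f3 (Suc m) ` overpartitions_box m b" (is "?L = ?A \<union> ?B \<union> ?C")
proof
  show "?L \<subseteq> ?A \<union> ?B \<union> ?C"
  proof
    fix x assume xL: "x \<in> ?L"
    obtain p ov where x: "x = (p, ov)" by (cases x)
    have parts: "\<forall>y\<in>#p. 0 < y \<and> y \<le> Suc m" and sz: "size p \<le> Suc b" and ovs: "ov \<subseteq> set_mset p"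
      using xL x unfolding overpartitions_box_def by auto
    show "x \<in> ?A \<union> ?B \<union> ?C"
    proof (cases "Suc m \<in># p")
      case False
      then have "\<forall>y\<in>#p. 0 < y \<and> y \<le> m" using parts by (metis le_SucE)
      then have "x \<in> ?A" using x sz ovs unfolding overpartitions_box_def by auto
      then show ?thesis by blast
    next
      case True
      define p' where "p' = p - {#Suc m#}"
      have pp: "p = add_mset (Suc m) p'" unfolding p'_def using True by simp
      have sz': "size p' \<le> b" using sz pp by simp
      have parts': "\<forall>y\<in>#p'. 0 < y \<and> y \<le> Suc m" using parts pp by auto
      show ?thesis
      proof (cases "Suc m \<in> ov \<and> count p (Suc m) = 1")
        case True
        have nin: "Suc m \<notin># p'" using True pp by (simp add: count_eq_zero_iff[symmetric])
        have parts'': "\<forall>y\<in>#p'. 0 < y \<and> y \<le> m" using parts' nin by (metis le_SucE)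
        have ovs': "ov - {Suc m} \<subseteq> set_mset p'" using ovs pp by auto
        have "(p', ov - {Suc m}) \<in> overpartitions_box m b"
          using parts'' sz' ovs' unfolding overpartitions_box_def by auto
        moreover have "x = f3 (Suc m) (p', ov - {Suc m})" using x pp True unfolding f3_def by auto
        ultimately show ?thesis by blast
      next
        case False
        have ovs': "ov \<subseteq> set_mset p'"
        proof
          fix y assume "y \<in> ov"
          then have "y \<in># p" using ovs by auto
          show "y \<in># p'"
          proof (cases "y = Suc m")
            case True
            then have "count p (Suc m) \<noteq> 1" using False \<open>y \<in> ov\<close> by auto
            moreover have "count p (Suc m) = Suc (count p' (Suc m))" using pp by simp
            ultimately show ?thesis using True by (simp add: count_eq_zero_iff[symmetric])
          next
            case False
            then show ?thesis using \<open>y \<in># p\<close> pp by auto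
          qed
        qed
        have "(p', ov) \<in> overpartitions_box (Suc m) b"
          using parts' sz' ovs' unfolding overpartitions_box_def by auto
        moreover have "x = f2 (Suc m) (p', ov)" using x pp unfolding f2_def by auto
        ultimately show ?thesis by blast
      qed
    qed
  qed
next
  show "?A \<union> ?B \<union> ?C \<subseteq> ?L"
  proof (intro Un_least)
    show "?A \<subseteq> ?L" unfolding overpartitions_box_def by auto
    show "?B \<subseteq> ?L"
    proof
      fix x assume "x \<in> ?B"
      then obtain p ov where y: "(p, ov) \<in> overpartitions_box (Suc m) b" and x: "x = (add_mset (Suc m) p, ov)"
        unfolding f2_def by auto
      then show "x \<in> ?L" unfolding overpartitions_box_def by auto
    qed
    show "?C \<subseteq> ?L"
    proof
      fix x assume "x \<in> ?C"
      then obtain p ov where y: "(p, ov) \<in> overpartitions_box m b" and x: "x = (add_mset (Suc m) p, insert (Suc m) ov)"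
        unfolding f3_def by auto
      then show "x \<in> ?L" unfolding overpartitions_box_def by auto
    qed
  qed
qed

lemma box_parts: "x \<in> overpartitions_box m b \<Longrightarrow> y \<in># fst x \<Longrightarrow> y \<le> m"
  unfolding overpartitions_box_def by auto

lemma box_ov: "x \<in> overpartitions_box m b \<Longrightarrow> snd x \<subseteq> set_mset (fst x)"
  unfolding overpartitions_box_def by auto

lemma disj1: "overpartitions_box m (Suc b) \<inter> (f2 (Suc m) ` overpartitions_box (Suc m) b \<union> f3 (Suc m) ` overpartitions_box m b) = {}"
proof -
  { fix x assume xa: "x \<in> overpartitions_box m (Suc b)"
    have "Suc m \<notin># fst x" using box_parts[OF xa] by fastforce
    then have "x \<notin> f2 (Suc m) ` overpartitions_box (Suc m) b" "x \<notin> f3 (Suc m) ` overpartitions_box m b"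
      unfolding f2_def f3_def by auto }
  then show ?thesis by blast
qed

lemma disj2: "f2 (Suc m) ` overpartitions_box (Suc m) b \<inter> f3 (Suc m) ` overpartitions_box m b = {}"
proof -
  { fix x y assume x: "x \<in> overpartitions_box (Suc m) b" and y: "y \<in> overpartitions_box m b"
      and eq: "f2 (Suc m) x = f3 (Suc m) y"
    have "Suc m \<notin># fst y" using box_parts[OF y] by fastforce
    have "Suc m \<in> snd x" using eq unfolding f2_def f3_def by auto
    then have "Suc m \<in># fst x" using box_ov[OF x] by auto
    then have "count (fst (f2 (Suc m) x)) (Suc m) \<ge> 2" unfolding f2_def
      by (simp add: count_eq_zero_iff[symmetric])
    moreover have "count (fst (f3 (Suc m) y)) (Suc m) = 1" unfolding f3_def
      using \<open>Suc m \<notin># fst y\<close> by (simp add: count_eq_zero_iff)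
    ultimately have False using eq by simp }
  then show ?thesis by blast
qed

lemma inj2: "inj_on (f2 c) A"
  unfolding f2_def inj_on_def by (auto simp: prod_eq_iff)

lemma inj3: "inj_on (f3 (Suc m)) (overpartitions_box m b)"
proof (rule inj_onI)
  fix x y assume x: "x \<in> overpartitions_box m b" and y: "y \<in> overpartitions_box m b"
    and eq: "f3 (Suc m) x = f3 (Suc m) y"
  have nx: "Suc m \<notin> snd x" using box_parts[OF x] box_ov[OF x] by fastforce
  have ny: "Suc m \<notin> snd y" using box_parts[OF y] box_ov[OF y] by fastforce
  have "fst x = fst y" using eq unfolding f3_def by simp
  moreover have "snd x = snd y"
  proof -
    have "insert (Suc m) (snd x) = insert (Suc m) (snd y)" using eq unfolding f3_def by simp
    then show ?thesis using nx ny by (metis insert_ident)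
  qed
  ultimately show "x = y" by (simp add: prod_eq_iff)
qed

lemma box_finite: "finite (overpartitions_box m b)"
proof (induction m b rule: Q.induct)
  case (1 b) then show ?case by (simp add: box_0)
next
  case (2 m) then show ?case by (simp add: box_m0)
next
  case (3 m b) then show ?case by (simp add: box_decomp)
qed

lemma qv_pow: "qv ^ n = monom 1 n"
  unfolding qv_def by (simp add: monom_power)

lemma wt_f2: "wt (f2 c x) = qv ^ c * wt x"
  unfolding wt_def f2_def qv_pow by (simp add: mult_monom)

lemma wt_f3: assumes "x \<in> overpartitions_box m b"
  shows "wt (f3 (Suc m) x) = tv * qv ^ Suc m * wt x"
proof -
  have nx: "Suc m \<notin> snd x" using box_parts[OF assms] box_ov[OF assms] by fastforce
  have fin: "finite (snd x)" using box_ov[OF assms] finite_subset by blast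
  have "card (insert (Suc m) (snd x)) = Suc (card (snd x))" using nx fin by simp
  then show ?thesis unfolding wt_def f3_def qv_pow tv_def
    by (simp add: mult_monom)
qed

definition Ov :: "nat \<Rightarrow> nat \<Rightarrow> int poly poly" where
  "Ov m b = (\<Sum>x \<in> overpartitions_box m b. wt x)"

lemma Ov_eq_Q: "Ov m b = Q m b"
proof (induction m b rule: Q.induct)
  case (1 b) then show ?case by (simp add: Ov_def box_0 wt_def)
next
  case (2 m) then show ?case by (simp add: Ov_def box_m0 wt_def)
next
  case (3 m b)
  have fA: "finite (overpartitions_box m (Suc b))" "finite (overpartitions_box (Suc m) b)"
     "finite (overpartitions_box m b)" by (rule box_finite)+
  have "Ov (Suc m) (Suc b) = Ov m (Suc b) + (\<Sum>x \<in> f2 (Suc m) ` overpartitions_box (Suc m) b. wt x)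
     + (\<Sum>x \<in> f3 (Suc m) ` overpartitions_box m b. wt x)"
  proof -
    let ?A = "overpartitions_box m (Suc b)" and ?B = "f2 (Suc m) ` overpartitions_box (Suc m) b"
      and ?C = "f3 (Suc m) ` overpartitions_box m b"
    have fB: "finite ?B" "finite ?C" using fA by auto
    have d1: "(?A \<union> ?B) \<inter> ?C = {}" using disj1[of m b] disj2[of m b] by blast
    have d2: "?A \<inter> ?B = {}" using disj1[of m b] by blast
    have "sum wt (?A \<union> ?B \<union> ?C) = sum wt (?A \<union> ?B) + sum wt ?C"
      by (rule sum.union_disjoint) (use fA fB d1 in auto)
    also have "sum wt (?A \<union> ?B) = sum wt ?A + sum wt ?B"
      by (rule sum.union_disjoint) (use fA fB d2 in auto)
    finally show ?thesis unfolding Ov_def box_decomp .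
  qed
  also have "(\<Sum>x \<in> f2 (Suc m) ` overpartitions_box (Suc m) b. wt x) = qv ^ Suc m * Ov (Suc m) b"
    unfolding Ov_def by (simp add: sum.reindex[OF inj2] wt_f2 sum_distrib_left)
  also have "(\<Sum>x \<in> f3 (Suc m) ` overpartitions_box m b. wt x) = tv * qv ^ Suc m * Ov m b"
    unfolding Ov_def by (simp add: sum.reindex[OF inj3] wt_f3 sum_distrib_left)
  finally show ?case using 3 by simp
qed

lemma ovgauss_Q: "ovgauss a b = Q (a - b) b"
proof -
  have "ovgauss a b = Ov (a - b) b"
    unfolding ovgauss_def Ov_def wt_def by (simp add: case_prod_beta)
  then show ?thesis by (simp add: Ov_eq_Q)
qed

lemma Qi_int: "Qi (int a) (int b) = Q a b" unfolding Qi_def by simp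

lemma step1:
  assumes "1 \<le> k" "k \<le> l" "l + 1 \<le> n"
  shows "nonneg_coeffs2 (ovgauss n k * ovgauss n l - ovgauss n (k-1) * ovgauss n (l+1))"
proof -
  have h: "nonneg_coeffs2 (Hx (int (n-k)) (int k) (int (n-l)) (int l) 0)"
    by (rule H_nonneg) (use assms in auto)
  have e1: "int (n-k) + 1 = int (n - (k-1))" "int k - 1 = int (k-1)"
    "int (n-l) - 1 = int (n-(l+1))" "int l + 1 = int (l+1)" using assms by auto
  have "Hx (int (n-k)) (int k) (int (n-l)) (int l) 0
      = ovgauss n k * ovgauss n l - ovgauss n (k-1) * ovgauss n (l+1)"
    unfolding Hx_def e1 Qi_int ovgauss_Q by simp
  then show ?thesis using h by simp
qed

lemma telescope:
  "r \<le> k \<Longrightarrow> k \<le> l \<Longrightarrow> l + r \<le> n \<Longrightarrow>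
   nonneg_coeffs2 (ovgauss n k * ovgauss n l - ovgauss n (k - r) * ovgauss n (l + r))"
proof (induction r arbitrary: k l)
  case 0 then show ?case by (simp add: nn_zero)
next
  case (Suc r)
  have a: "nonneg_coeffs2 (ovgauss n k * ovgauss n l - ovgauss n (k-1) * ovgauss n (l+1))"
    by (rule step1) (use Suc.prems in auto)
  have b: "nonneg_coeffs2 (ovgauss n (k-1) * ovgauss n (l+1) - ovgauss n (k - 1 - r) * ovgauss n (l + 1 + r))"
    by (rule Suc.IH) (use Suc.prems in auto)
  have eq: "k - Suc r = k - 1 - r" "l + Suc r = l + 1 + r" by auto
  show ?case using nn_add[OF a b] unfolding eq by simp
qed

theorem corollary6p7:
  fixes k l r n :: nat
  assumes "r \<le> k" and "k \<le> l" and "l + r \<le> n"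
  shows "nonneg_coeffs2 (ovgauss n k * ovgauss n l - ovgauss n (k - r) * ovgauss n (l + r))"
  using telescope assms by blast

end
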